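(* Let $\textbf{F}$ be a $gH$-differentiable IVF on a nonempty subset $\mathcal{X}$ of $\mathbb{R}^n$. If $\bar{x}\in\mathcal{X}$ is an efficient solution of the problem $\min_{x\in\mathcal{X}}\textbf{F}(x)$, then $0\in D_i\textbf{F}(\bar{x})$ for each $i\in\{1,2,\dots,n\}$.
   Context: $I(\mathbb{R})$: closed bounded intervals $\textbf{A}=[\underline{a},\overline{a}]$ with Moore arithmetic ($\oplus$ endpointwise; $\lambda\odot\textbf{A}=[\lambda\underline{a},\lambda\overline{a}]$ if $\lambda\ge0$, $[\lambda\overline{a},\lambda\underline{a}]$ if $\lambda<0$); $gH$-difference $\textbf{A}\ominus_{gH}\textbf{B}=[\min\{\underline{a}-\underline{b},\overline{a}-\overline{b}\},\max\{\underline{a}-\underline{b},\overline{a}-\overline{b}\}]$; limits in the norm $\max\{|\underline{a}|,|\overline{a}|\}$. $\textbf{A}\prec\textbf{B}$ iff $\underline{a}\le\underline{b}$, $\overline{a}\le\overline{b}$ and $\textbf{A}\ne\textbf{B}$; $\nprec$ is its negation. An IVF is $\textbf{F}(x)=[\underline{f}(x),\overline{f}(x)]$. $D_i\textbf{F}(\bar{x})=\lim_{h\to0}\frac1h\odot(\textbf{F}(\bar{x}+he_i)\ominus_{gH}\textbf{F}(\bar{x}))$. Linear IVF: $\textbf{L}(x)=\bigoplus_i x_i\odot\textbf{L}(e_i)$. $\textbf{F}$ is $gH$-differentiable at $\bar{x}$ if there exist a linear IVF $\textbf{L}_{\bar{x}}$, an IVF $\textbf{E}(\textbf{F}(\bar{x});d)$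 and $\delta>0$ with $(\textbf{F}(\bar{x}+d)\ominus_{gH}\textbf{F}(\bar{x}))\ominus_{gH}\textbf{L}_{\bar{x}}(d)=\lVert d\rVert\odot\textbf{E}(\textbf{F}(\bar{x});d)$ for $\lVert d\rVert<\delta$ and $\textbf{E}\to\textbf{0}$ as $\lVert d\rVert\to0$; on $\mathcal{X}$ means at every point. $\bar{x}$ is an efficient solution of $\min_{x\in\mathcal{X}}\textbf{F}(x)$ if $\textbf{F}(x)\nprec\textbf{F}(\bar{x})$ for all $x\in\mathcal{X}$, $x\ne\bar{x}$. *)

theory Defs
  imports "HOL-Analysis.Analysis"
begin

text \<open>Closed bounded intervals [a_lo, a_hi] are represented as pairs (a_lo, a_hi);
  a pair is a genuine interval iff fst <= snd.\<close>
type_synonym ival = "real \<times> real"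

definition is_ival :: "ival \<Rightarrow> bool" where
  "is_ival A \<longleftrightarrow> fst A \<le> snd A"

definition iv_add :: "ival \<Rightarrow> ival \<Rightarrow> ival" where
  "iv_add A B = (fst A + fst B, snd A + snd B)"

definition iv_smul :: "real \<Rightarrow> ival \<Rightarrow> ival" where
  "iv_smul l A = (if l \<ge> 0 then (l * fst A, l * snd A) else (l * snd A, l * fst A))"

definition iv_gH :: "ival \<Rightarrow> ival \<Rightarrow> ival" where
  "iv_gH A B = (min (fst A - fst B) (snd A - snd B), max (fst A - fst B) (snd A - snd B))"

definition iv_norm :: "ival \<Rightarrow> real" where
  "iv_norm A = max \<bar>fst A\<bar> \<bar>snd A\<bar>"

definition iv_prec :: "ival \<Rightarrow> ival \<Rightarrow> bool" where
  "iv_prec A B \<longleftrightarrow> fst A \<le> fst B \<and> snd A \<le> snd B \<and> A \<noteq> B"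

definition iv_mem :: "real \<Rightarrow> ival \<Rightarrow> bool" where
  "iv_mem r A \<longleftrightarrow> fst A \<le> r \<and> r \<le> snd A"

definition iv_tendsto_at0 :: "(real \<Rightarrow> ival) \<Rightarrow> ival \<Rightarrow> bool" where
  "iv_tendsto_at0 G D \<longleftrightarrow> ((\<lambda>h. iv_norm (iv_gH (G h) D)) \<longlongrightarrow> 0) (at 0)"

definition gH_partial :: "(real^'n \<Rightarrow> ival) \<Rightarrow> real^'n \<Rightarrow> 'n \<Rightarrow> ival \<Rightarrow> bool" where
  "gH_partial F x i D \<longleftrightarrow>
     iv_tendsto_at0 (\<lambda>h. iv_smul (1 / h) (iv_gH (F (x + h *\<^sub>R axis i 1)) (F x))) D"

text \<open>Linear IVF determined by its values Lv i = L(e_i):  L(x) = sum_i x_i (.) L(e_i).\<close>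
definition iv_linear_apply :: "('n::finite \<Rightarrow> ival) \<Rightarrow> real^'n \<Rightarrow> ival" where
  "iv_linear_apply Lv d =
     ((\<Sum>i\<in>UNIV. fst (iv_smul (d $ i) (Lv i))), (\<Sum>i\<in>UNIV. snd (iv_smul (d $ i) (Lv i))))"

text \<open>gH-differentiability at x of an IVF F whose domain is X (so F(x+d) must be
  defined, i.e. x+d in X, for all small d).\<close>
definition gH_differentiable_at ::
  "(real^'n) set \<Rightarrow> (real^'n \<Rightarrow> ival) \<Rightarrow> real^'n \<Rightarrow> bool" where
  "gH_differentiable_at X F x \<longleftrightarrow>
     (\<exists>(Lv :: 'n \<Rightarrow> ival) (E :: real^'n \<Rightarrow> ival) (\<delta>::real).
        (\<forall>i. is_ival (Lv i)) \<and> \<delta> > 0 \<and> ball x \<delta> \<subseteq> X \<and>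
        (\<forall>d. norm d < \<delta> \<longrightarrow>
           iv_gH (iv_gH (F (x + d)) (F x)) (iv_linear_apply Lv d) = iv_smul (norm d) (E d)) \<and>
        ((\<lambda>d. iv_norm (E d)) \<longlongrightarrow> 0) (at 0))"

definition gH_differentiable_on ::
  "(real^'n) set \<Rightarrow> (real^'n \<Rightarrow> ival) \<Rightarrow> bool" where
  "gH_differentiable_on X F \<longleftrightarrow> (\<forall>x\<in>X. gH_differentiable_at X F x)"

definition efficient_solution ::
  "(real^'n) set \<Rightarrow> (real^'n \<Rightarrow> ival) \<Rightarrow> real^'n \<Rightarrow> bool" where
  "efficient_solution X F xb \<longleftrightarrow> xb \<in> X \<and> (\<forall>x\<in>X. x \<noteq> xb \<longrightarrow> \<not> iv_prec (F x) (F xb))"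

end

theory Submission
  imports Defs
begin

lemma norm_gH: "iv_norm (iv_gH A B) = max \<bar>fst A - fst B\<bar> \<bar>snd A - snd B\<bar>"
  unfolding iv_norm_def iv_gH_def by auto

lemma norm_smul: "iv_norm (iv_smul c A) = \<bar>c\<bar> * iv_norm A"
  unfolding iv_norm_def iv_smul_def by (auto simp: abs_mult max_mult_distrib_left)

lemma lin_axis: "iv_linear_apply Lv (h *\<^sub>R axis i 1) = iv_smul h (Lv i)"
proof -
  have a: "(\<Sum>j\<in>UNIV. fst (iv_smul ((h *\<^sub>R axis i 1) $ j) (Lv j)))
     = (\<Sum>j\<in>UNIV. if j = i then fst (iv_smul h (Lv i)) else 0)"
    by (rule sum.cong) (auto simp: axis_def iv_smul_def)
  have b: "(\<Sum>j\<in>UNIV. snd (iv_smul ((h *\<^sub>R axis i 1) $ j) (Lv j)))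
     = (\<Sum>j\<in>UNIV. if j = i then snd (iv_smul h (Lv i)) else 0)"
    by (rule sum.cong) (auto simp: axis_def iv_smul_def)
  show ?thesis unfolding iv_linear_apply_def a b by simp
qed

lemma divneg_aux: "(x::real) / t < 0 \<Longrightarrow> 0 < t \<Longrightarrow> x < 0"
  by (simp add: divide_less_0_iff)

lemma divpos_aux: "(x::real) / t > 0 \<Longrightarrow> t < 0 \<Longrightarrow> x < 0"
  by (simp add: zero_less_divide_iff)

lemma absmul_aux: "(h::real) \<noteq> 0 \<Longrightarrow> \<bar>h\<bar> * \<bar>m / h - l\<bar> = \<bar>m - h * l\<bar>"
  by (simp add: abs_mult[symmetric] right_diff_distrib)

lemma key_arith0:
  fixes h m M l1 l2 N :: real
  assumes "h \<noteq> 0" "l1 \<le> l2"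
    and "iv_norm (iv_gH (m, M) (iv_smul h (l1, l2))) = \<bar>h\<bar> * N"
  shows "iv_norm (iv_gH (iv_smul (1/h) (m, M)) (l1, l2)) = N"
proof -
  have "\<bar>h\<bar> * iv_norm (iv_gH (iv_smul (1/h) (m, M)) (l1, l2)) = \<bar>h\<bar> * N"
  proof (cases "h > 0")
    case True
    have "\<bar>h\<bar> * iv_norm (iv_gH (iv_smul (1/h) (m, M)) (l1, l2))
       = max (\<bar>h\<bar> * \<bar>m / h - l1\<bar>) (\<bar>h\<bar> * \<bar>M / h - l2\<bar>)"
      using True unfolding norm_gH iv_smul_def by (simp add: max_mult_distrib_left)
    also have "\<dots> = max \<bar>m - h * l1\<bar> \<bar>M - h * l2\<bar>"
      using True by (simp only: absmul_aux)
    finally show ?thesis using assms True unfolding norm_gH iv_smul_def by simp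
  next
    case False
    hence h: "h < 0" using assms by simp
    have "\<bar>h\<bar> * iv_norm (iv_gH (iv_smul (1/h) (m, M)) (l1, l2))
       = max (\<bar>h\<bar> * \<bar>M / h - l1\<bar>) (\<bar>h\<bar> * \<bar>m / h - l2\<bar>)"
      using h unfolding norm_gH iv_smul_def by (simp add: max_mult_distrib_left)
    also have "\<dots> = max \<bar>M - h * l1\<bar> \<bar>m - h * l2\<bar>"
      using h by (simp only: absmul_aux)
    finally show ?thesis using assms h unfolding norm_gH iv_smul_def by (simp add: max.commute)
  qed
  thus ?thesis using assms by simp
qed

lemma key_arith:
  fixes h p q l1 l2 N :: real
  assumes "h \<noteq> 0" "l1 \<le> l2"
    and "iv_norm (iv_gH (min p q, max p q) (iv_smul h (l1, l2))) = \<bar>h\<bar> * N"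
  shows "iv_norm (iv_gH (iv_smul (1/h) (min p q, max p q)) (l1, l2)) = N"
  using key_arith0[OF assms] .

theorem corollary4p1:
  fixes X :: "(real^'n) set" and F :: "real^'n \<Rightarrow> ival" and xb :: "real^'n"
  assumes "X \<noteq> {}"
    and "\<forall>x\<in>X. is_ival (F x)"
    and "gH_differentiable_on X F"
    and "efficient_solution X F xb"
  shows "\<forall>i. \<exists>D. gH_partial F xb i D \<and> iv_mem 0 D"
proof
  fix i :: 'n
  have xbX: "xb \<in> X" "\<forall>x\<in>X. x \<noteq> xb \<longrightarrow> \<not> iv_prec (F x) (F xb)"
    using assms(4) unfolding efficient_solution_def by auto
  then obtain Lv E \<delta> where Lv: "\<forall>i. is_ival (Lv i)" and dpos: "\<delta> > 0" and ball: "ball xb \<delta> \<subseteq> X"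
    and eq: "\<forall>d. norm d < \<delta> \<longrightarrow>
           iv_gH (iv_gH (F (xb + d)) (F xb)) (iv_linear_apply Lv d) = iv_smul (norm d) (E d)"
    and lim: "((\<lambda>d. iv_norm (E d)) \<longlongrightarrow> 0) (at 0)"
    using assms(3) unfolding gH_differentiable_on_def gH_differentiable_at_def by blast
  define l1 where "l1 = fst (Lv i)"
  define l2 where "l2 = snd (Lv i)"
  have Lvi: "Lv i = (l1, l2)" "l1 \<le> l2" using Lv unfolding l1_def l2_def is_ival_def by auto
  define Q where "Q = (\<lambda>h. iv_smul (1 / h) (iv_gH (F (xb + h *\<^sub>R axis i 1)) (F xb)))"
  have keyeq: "iv_norm (iv_gH (Q h) (Lv i)) = iv_norm (E (h *\<^sub>R axis i 1))"
    if "h \<noteq> 0" "\<bar>h\<bar> < \<delta>" for h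
  proof -
    define p where "p = fst (F (xb + h *\<^sub>R axis i 1)) - fst (F xb)"
    define q where "q = snd (F (xb + h *\<^sub>R axis i 1)) - snd (F xb)"
    have G: "iv_gH (F (xb + h *\<^sub>R axis i 1)) (F xb) = (min p q, max p q)"
      unfolding iv_gH_def p_def q_def by simp
    have "iv_gH (min p q, max p q) (iv_smul h (l1, l2)) = iv_smul \<bar>h\<bar> (E (h *\<^sub>R axis i 1))"
      using eq[rule_format, of "h *\<^sub>R axis i 1"] that G Lvi by (simp add: lin_axis)
    hence "iv_norm (iv_gH (min p q, max p q) (iv_smul h (l1, l2))) = \<bar>h\<bar> * iv_norm (E (h *\<^sub>R axis i 1))"
      by (simp add: norm_smul)
    from key_arith[OF that(1) Lvi(2) this] show ?thesis unfolding Q_def G Lvi .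
  qed
  have lim2: "((\<lambda>h. iv_norm (E (h *\<^sub>R axis i 1))) \<longlongrightarrow> 0) (at (0::real))"
  proof -
    have "filterlim (\<lambda>h::real. h *\<^sub>R axis i (1::real)) (at 0) (at 0)"
    proof (rule filterlim_atI)
      show "((\<lambda>h::real. h *\<^sub>R axis i (1::real)) \<longlongrightarrow> 0) (at 0)"
        by (auto intro!: tendsto_eq_intros)
      show "\<forall>\<^sub>F h in at 0. h *\<^sub>R axis i (1::real) \<noteq> 0"
        by (auto simp: eventually_at_filter axis_eq_0_iff)
    qed
    from filterlim_compose[OF lim this] show ?thesis by (simp add: o_def)
  qed
  have limQ: "((\<lambda>h. iv_norm (iv_gH (Q h) (Lv i))) \<longlongrightarrow> 0) (at 0)"
  proof (rule Lim_transform_eventually[OF lim2])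
    show "\<forall>\<^sub>F h in at 0. iv_norm (E (h *\<^sub>R axis i 1)) = iv_norm (iv_gH (Q h) (Lv i))"
      unfolding eventually_at using dpos keyeq by (auto intro!: exI[of _ \<delta>])
  qed
  have part: "gH_partial F xb i (Lv i)"
    unfolding gH_partial_def iv_tendsto_at0_def using limQ unfolding Q_def .
  have notprec: False if "h \<noteq> 0" "\<bar>h\<bar> < \<delta>"
     "fst (F (xb + h *\<^sub>R axis i 1)) < fst (F xb)" "snd (F (xb + h *\<^sub>R axis i 1)) < snd (F xb)" for h
  proof -
    have "xb + h *\<^sub>R axis i 1 \<in> X" using ball that by (auto simp: dist_norm)
    moreover have "xb + h *\<^sub>R axis i 1 \<noteq> xb" using that by (simp add: axis_eq_0_iff)
    moreover have "iv_prec (F (xb + h *\<^sub>R axis i 1)) (F xb)" using that unfolding iv_prec_def by auto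
    ultimately show False using xbX by blast
  qed
  have "iv_mem 0 (Lv i)"
  proof (rule ccontr)
    assume "\<not> iv_mem 0 (Lv i)"
    hence c: "l2 < 0 \<or> l1 > 0" using Lvi unfolding iv_mem_def by auto
    define \<epsilon> where "\<epsilon> = (if l2 < 0 then - l2 else l1)"
    have ep: "\<epsilon> > 0" using c unfolding \<epsilon>_def by auto
    from limQ have "\<forall>\<^sub>F h in at 0. iv_norm (iv_gH (Q h) (Lv i)) < \<epsilon>"
      using ep by (auto dest: order_tendstoD(2))
    then obtain d where d: "d > 0" "\<And>h. h \<noteq> 0 \<Longrightarrow> dist h 0 < d \<Longrightarrow> iv_norm (iv_gH (Q h) (Lv i)) < \<epsilon>"
      unfolding eventually_at by blast
    define t where "t = min d \<delta> / 2"
    have t: "t > 0" "t < d" "t < \<delta>" using d dpos unfolding t_def by auto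
    show False
    proof (cases "l2 < 0")
      case True
      define h where "h = t"
      define p where "p = fst (F (xb + h *\<^sub>R axis i 1)) - fst (F xb)"
      define q where "q = snd (F (xb + h *\<^sub>R axis i 1)) - snd (F xb)"
      have "iv_norm (iv_gH (Q h) (Lv i)) < \<epsilon>" using d(2)[of h] t unfolding h_def by auto
      moreover have "iv_gH (F (xb + h *\<^sub>R axis i 1)) (F xb) = (min p q, max p q)"
        unfolding iv_gH_def p_def q_def by simp
      ultimately have "iv_norm (iv_gH (iv_smul (1/h) (min p q, max p q)) (l1, l2)) < - l2"
        using True unfolding Q_def Lvi \<epsilon>_def by simp
      moreover have "1/h \<ge> 0" using t unfolding h_def by simp
      ultimately have "\<bar>(1/h) * max p q - l2\<bar> < - l2" unfolding norm_gH iv_smul_def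
        by (simp only: fst_conv snd_conv if_True; linarith)
      hence "\<bar>max p q / h - l2\<bar> < - l2" by simp
      hence "max p q / h < 0" by linarith
      hence "max p q < 0" using t(1) unfolding h_def by (rule divneg_aux)
      thus False using notprec[of h] t unfolding p_def q_def h_def by auto
    next
      case False
      hence l1: "l1 > 0" using c by auto
      define h where "h = - t"
      define p where "p = fst (F (xb + h *\<^sub>R axis i 1)) - fst (F xb)"
      define q where "q = snd (F (xb + h *\<^sub>R axis i 1)) - snd (F xb)"
      have "iv_norm (iv_gH (Q h) (Lv i)) < \<epsilon>" using d(2)[of h] t unfolding h_def by auto
      moreover have "iv_gH (F (xb + h *\<^sub>R axis i 1)) (F xb) = (min p q, max p q)"
        unfolding iv_gH_def p_def q_def by simp
      ultimately have "iv_norm (iv_gH (iv_smul (1/h) (min p q, max p q)) (l1, l2)) < l1"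
        using False unfolding Q_def Lvi \<epsilon>_def by simp
      moreover have "\<not> (1/h \<ge> 0)" using t unfolding h_def by simp
      ultimately have "\<bar>(1/h) * max p q - l1\<bar> < l1" unfolding norm_gH iv_smul_def
        by (simp only: fst_conv snd_conv if_False; linarith)
      hence "\<bar>max p q / h - l1\<bar> < l1" by simp
      hence "max p q / h > 0" by linarith
      moreover have "h < 0" using t unfolding h_def by simp
      ultimately have "max p q < 0" by (rule divpos_aux)
      thus False using notprec[of h] t unfolding p_def q_def h_def by auto
    qed
  qed
  thus "\<exists>D. gH_partial F xb i D \<and> iv_mem 0 D" using part by blast
qed

end
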